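(* For all positive integers $k$ and $i$ with $1\le i\le k$, the sets $\Pi_{i,k}$ and $\Pi_{i,k}^c$ are minimal unavoidable sets.
   Context: For $\sigma\in S_n$, the cyclic permutation $[\sigma]$ is the set of all rotations of $\sigma$. For $\pi\in S_k$, the totally vincular pattern $\overline{\pi}$ is $\pi$ with all adjacent positions overlined; a cyclic permutation $[\sigma]$ of length $n\ge k$ contains $\overline{\pi}$ if some $k$ cyclically consecutive entries $\sigma_j\sigma_{j+1}\cdots\sigma_{j+k-1}$ (indices mod $n$) are order-isomorphic to $\pi$. $\overline{S_k}$ is the set of totally vincular patterns of length $k$. For $\Pi\subseteq\overline{S_k}$, $\mathrm{Av}_n[\Pi]$ is the set of cyclic permutations of length $n$ containing no pattern of $\Pi$. $\Pi$ is unavoidable if $|\mathrm{Av}_n[\Pi]|=0$ for all sufficiently large $n$, and avoidable otherwise; $\Pi$ is a minimal unavoidable set if it is unavoidable but every proper subset is avoidable. $\Pi_{i,k}$ is the set of all $\overline{\pi}\in\overline{S_k}$ with $\pi_i=1$, and $\Pi_{i,k}^c$ is the set of all $\overline{\pi}\in\overline{S_k}$ with $\pi_i=k$. *)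

theory Defs
  imports Main
begin

definition perms :: "nat \<Rightarrow> nat list set" where
  "perms n = {\<sigma>. distinct \<sigma> \<and> set \<sigma> = {1..n}}"

text \<open>Cyclic permutation: the set of all rotations of \<sigma>.\<close>
definition cyc :: "nat list \<Rightarrow> nat list set" where
  "cyc \<sigma> = {rotate r \<sigma> | r. r < length \<sigma>}"

definition order_iso :: "nat list \<Rightarrow> nat list \<Rightarrow> bool" where
  "order_iso xs ys \<longleftrightarrow> length xs = length ys \<and>
     (\<forall>a < length xs. \<forall>b < length xs. (xs ! a < xs ! b \<longleftrightarrow> ys ! a < ys ! b))"

definition cwindow :: "nat list \<Rightarrow> nat \<Rightarrow> nat \<Rightarrow> nat list" where
  "cwindow \<sigma> j k = map (\<lambda>t. \<sigma> ! ((j + t) mod length \<sigma>)) [0..<k]"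

text \<open>The cyclic permutation [\<sigma>] contains the totally vincular pattern \<pi>-bar.\<close>
definition cyc_contains :: "nat list \<Rightarrow> nat list \<Rightarrow> bool" where
  "cyc_contains \<sigma> \<pi> \<longleftrightarrow> length \<sigma> \<ge> length \<pi> \<and>
     (\<exists>j < length \<sigma>. order_iso (cwindow \<sigma> j (length \<pi>)) \<pi>)"

text \<open>Av_n[\<Pi>] as a set of cyclic permutations (rotation classes).\<close>
definition Av :: "nat \<Rightarrow> nat list set \<Rightarrow> nat list set set" where
  "Av n \<Pi> = {cyc \<sigma> | \<sigma>. \<sigma> \<in> perms n \<and> \<not> (\<exists>\<pi>\<in>\<Pi>. cyc_contains \<sigma> \<pi>)}"

definition unavoidable :: "nat list set \<Rightarrow> bool" where
  "unavoidable \<Pi> \<longleftrightarrow> (\<exists>N. \<forall>n \<ge> N. card (Av n \<Pi>) = 0)"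

definition avoidable :: "nat list set \<Rightarrow> bool" where
  "avoidable \<Pi> \<longleftrightarrow> \<not> unavoidable \<Pi>"

definition minimal_unavoidable :: "nat list set \<Rightarrow> bool" where
  "minimal_unavoidable \<Pi> \<longleftrightarrow> unavoidable \<Pi> \<and> (\<forall>\<Pi>'. \<Pi>' \<subset> \<Pi> \<longrightarrow> avoidable \<Pi>')"

text \<open>\<Pi>_{i,k}: patterns of length k with \<pi>_i = 1 (1-based i);
  \<Pi>^c_{i,k}: patterns with \<pi>_i = k.\<close>
definition Pi_low :: "nat \<Rightarrow> nat \<Rightarrow> nat list set" where
  "Pi_low i k = {\<pi> \<in> perms k. \<pi> ! (i - 1) = 1}"

definition Pi_high :: "nat \<Rightarrow> nat \<Rightarrow> nat list set" where
  "Pi_high i k = {\<pi> \<in> perms k. \<pi> ! (i - 1) = k}"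

end

theory Submission
  imports Defs
begin


definition rk :: "nat list \<Rightarrow> nat \<Rightarrow> nat" where
  "rk w a = card {b. b < length w \<and> w ! b \<le> w ! a}"

definition stdz :: "nat list \<Rightarrow> nat list" where
  "stdz w = map (rk w) [0..<length w]"

lemma rk_mono:
  assumes "a < length w" "a' < length w" "w ! a < w ! a'"
  shows "rk w a < rk w a'"
  unfolding rk_def
proof (rule psubset_card_mono)
  show "finite {b. b < length w \<and> w ! b \<le> w ! a'}" by simp
  show "{b. b < length w \<and> w ! b \<le> w ! a} \<subset> {b. b < length w \<and> w ! b \<le> w ! a'}"
  proof
    show "{b. b < length w \<and> w ! b \<le> w ! a} \<subseteq> {b. b < length w \<and> w ! b \<le> w ! a'}"
      using assms(3) by auto
    have "a' \<in> {b. b < length w \<and> w ! b \<le> w ! a'}" using assms(2) by simp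
    moreover have "a' \<notin> {b. b < length w \<and> w ! b \<le> w ! a}" using assms(3) by simp
    ultimately show "{b. b < length w \<and> w ! b \<le> w ! a} \<noteq> {b. b < length w \<and> w ! b \<le> w ! a'}" by blast
  qed
qed

lemma rk_ge1: "a < length w \<Longrightarrow> rk w a \<ge> 1"
  unfolding rk_def
proof -
  assume a: "a < length w"
  have "finite {b. b < length w \<and> w ! b \<le> w ! a}" by simp
  moreover have "a \<in> {b. b < length w \<and> w ! b \<le> w ! a}" using a by simp
  ultimately have "card {b. b < length w \<and> w ! b \<le> w ! a} > 0" using card_gt_0_iff by blast
  then show "1 \<le> card {b. b < length w \<and> w ! b \<le> w ! a}" by simp
qed

lemma rk_le: "rk w a \<le> length w"
  unfolding rk_def
proof -
  have "{b. b < length w \<and> w ! b \<le> w ! a} \<subseteq> {..<length w}" by auto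
  then show "card {b. b < length w \<and> w ! b \<le> w ! a} \<le> length w"
    using card_mono[of "{..<length w}"] by fastforce
qed

lemma rk_iff:
  assumes "distinct w" "a < length w" "b < length w"
  shows "w ! a < w ! b \<longleftrightarrow> rk w a < rk w b"
proof
  assume "w ! a < w ! b" then show "rk w a < rk w b" using rk_mono assms by blast
next
  assume h: "rk w a < rk w b"
  show "w ! a < w ! b"
  proof (rule ccontr)
    assume "\<not> w ! a < w ! b"
    then have "w ! b < w ! a \<or> a = b"
      using assms nth_eq_iff_index_eq by fastforce
    then show False using h rk_mono[of b w a] assms by auto
  qed
qed

lemma stdz_perm:
  assumes "distinct w"
  shows "stdz w \<in> perms (length w)"
proof -
  let ?L = "length w"
  have inj: "inj_on (rk w) {0..<?L}"
  proof (rule inj_onI)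
    fix a b assume "a \<in> {0..<?L}" "b \<in> {0..<?L}" "rk w a = rk w b"
    then have "a < ?L" "b < ?L" "rk w a = rk w b" by auto
    then have "\<not> w ! a < w ! b" "\<not> w ! b < w ! a"
      using rk_iff[OF assms, of a b] rk_iff[OF assms, of b a] by auto
    then have "w ! a = w ! b" by simp
    then show "a = b" using nth_eq_iff_index_eq[OF assms] \<open>a < ?L\<close> \<open>b < ?L\<close> by blast
  qed
  have d: "distinct (stdz w)" unfolding stdz_def using inj by (simp add: distinct_map)
  have sub: "rk w ` {0..<?L} \<subseteq> {1..?L}" using rk_ge1 rk_le by auto
  have "card (rk w ` {0..<?L}) = ?L" using card_image[OF inj] by simp
  then have "rk w ` {0..<?L} = {1..?L}"
    using sub by (intro card_subset_eq) auto
  then have "set (stdz w) = {1..?L}" unfolding stdz_def by simp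
  with d show ?thesis unfolding perms_def by simp
qed

lemma stdz_iso:
  assumes "distinct w"
  shows "order_iso w (stdz w)"
  unfolding order_iso_def stdz_def using rk_iff[OF assms] by simp

lemma stdz_cong:
  assumes "order_iso w v"
  shows "stdz w = stdz v"
proof -
  have len: "length w = length v" using assms order_iso_def by blast
  have "rk w a = rk v a" if "a < length w" for a
  proof -
    have "{b. b < length w \<and> w ! b \<le> w ! a} = {b. b < length v \<and> v ! b \<le> v ! a}"
      using assms that len unfolding order_iso_def by (auto simp: not_less[symmetric])
    then show ?thesis unfolding rk_def by simp
  qed
  then show ?thesis unfolding stdz_def using len by simp
qed

lemma perm_len: "\<tau> \<in> perms k \<Longrightarrow> length \<tau> = k"
proof -
  assume "\<tau> \<in> perms k"
  then have "distinct \<tau>" "set \<tau> = {1..k}" unfolding perms_def by auto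
  then show "length \<tau> = k" using distinct_card[of \<tau>] by simp
qed

lemma stdz_id:
  assumes "\<tau> \<in> perms k"
  shows "stdz \<tau> = \<tau>"
proof -
  have len: "length \<tau> = k" using perm_len assms by blast
  have d: "distinct \<tau>" and s: "set \<tau> = {1..k}" using assms perms_def by auto
  have "rk \<tau> a = \<tau> ! a" if a: "a < k" for a
  proof -
    have "bij_betw (nth \<tau>) {b. b < length \<tau> \<and> \<tau> ! b \<le> \<tau> ! a} {1..\<tau> ! a}"
    proof (rule bij_betw_imageI)
      show "inj_on (nth \<tau>) {b. b < length \<tau> \<and> \<tau> ! b \<le> \<tau> ! a}"
        using d by (simp add: inj_on_def nth_eq_iff_index_eq)
      show "(nth \<tau>) ` {b. b < length \<tau> \<and> \<tau> ! b \<le> \<tau> ! a} = {1..\<tau> ! a}"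
      proof
        show "(nth \<tau>) ` {b. b < length \<tau> \<and> \<tau> ! b \<le> \<tau> ! a} \<subseteq> {1..\<tau> ! a}"
          using s nth_mem by fastforce
        show "{1..\<tau> ! a} \<subseteq> (nth \<tau>) ` {b. b < length \<tau> \<and> \<tau> ! b \<le> \<tau> ! a}"
        proof
          fix v assume v: "v \<in> {1..\<tau> ! a}"
          have "\<tau> ! a \<le> k" using s a len nth_mem by fastforce
          then have "v \<in> set \<tau>" using v s by auto
          then obtain b where "b < length \<tau>" "\<tau> ! b = v" using in_set_conv_nth[of v \<tau>] by blast
          then show "v \<in> (nth \<tau>) ` {b. b < length \<tau> \<and> \<tau> ! b \<le> \<tau> ! a}" using v by auto
        qed
      qed
    qed
    then show ?thesis unfolding rk_def using bij_betw_same_card by fastforce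
  qed
  then show ?thesis unfolding stdz_def using len by (intro nth_equalityI) auto
qed

lemma iso_unique:
  assumes "order_iso w \<pi>" "\<pi> \<in> perms k"
  shows "\<pi> = stdz w"
  using stdz_cong[OF assms(1)] stdz_id[OF assms(2)] by simp




definition bsig :: "nat list \<Rightarrow> nat \<Rightarrow> nat list" where
  "bsig \<pi> m = map (\<lambda>p. m * (\<pi> ! (p mod length \<pi>) - 1) + p div length \<pi> + 1) [0..<m * length \<pi>]"

lemma perm_vals: assumes "\<pi> \<in> perms k" "a < k" shows "1 \<le> \<pi> ! a \<and> \<pi> ! a \<le> k"
proof -
  have "\<pi> ! a \<in> set \<pi>" using perm_len[OF assms(1)] assms(2) by simp
  then show ?thesis using assms(1) unfolding perms_def by auto
qed

lemma bsig_len: "length (bsig \<pi> m) = m * length \<pi>"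
  unfolding bsig_def by simp

lemma bsig_nth: "p < m * length \<pi> \<Longrightarrow>
   bsig \<pi> m ! p = m * (\<pi> ! (p mod length \<pi>) - 1) + p div length \<pi> + 1"
  unfolding bsig_def by simp

lemma bsig_perm:
  assumes "\<pi> \<in> perms k" "k \<ge> 1" "m \<ge> 1"
  shows "bsig \<pi> m \<in> perms (m * k)"
proof -
  have len: "length \<pi> = k" using perm_len assms(1) by blast
  define f where "f = (\<lambda>p. m * (\<pi> ! (p mod k) - 1) + p div k + 1)"
  have bs: "bsig \<pi> m = map f [0..<m*k]" unfolding bsig_def f_def len by simp
  have dpi: "distinct \<pi>" using assms(1) perms_def by auto
  have inj: "inj_on f {0..<m*k}"
  proof (rule inj_onI)
    fix p q assume p: "p \<in> {0..<m*k}" and q: "q \<in> {0..<m*k}" and e: "f p = f q"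
    have tp: "p div k < m" using p by (simp add: less_mult_imp_div_less mult.commute)
    have tq: "q div k < m" using q by (simp add: less_mult_imp_div_less mult.commute)
    have e2: "m * (\<pi> ! (p mod k) - 1) + p div k = m * (\<pi> ! (q mod k) - 1) + q div k"
      using e unfolding f_def by simp
    have d1: "p div k = q div k"
      using arg_cong[OF e2, of "\<lambda>x. x mod m"] tp tq by simp
    have d2: "\<pi> ! (p mod k) - 1 = \<pi> ! (q mod k) - 1"
      using arg_cong[OF e2, of "\<lambda>x. x div m"] tp tq assms(3) by simp
    have "p mod k < k" "q mod k < k" using assms(2) by auto
    then have "1 \<le> \<pi> ! (p mod k)" "1 \<le> \<pi> ! (q mod k)" using perm_vals[OF assms(1)] by auto
    then have "\<pi> ! (p mod k) = \<pi> ! (q mod k)" using d2 by linarith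
    then have "p mod k = q mod k" using nth_eq_iff_index_eq[OF dpi] len \<open>p mod k < k\<close> \<open>q mod k < k\<close> by auto
    then show "p = q" using d1 by (metis div_mult_mod_eq)
  qed
  have sub: "f ` {0..<m*k} \<subseteq> {1..m*k}"
  proof
    fix v assume "v \<in> f ` {0..<m*k}"
    then obtain p where p: "p < m*k" and v: "v = f p" by auto
    have tp: "p div k < m" using p by (simp add: less_mult_imp_div_less mult.commute)
    have "p mod k < k" using assms(2) by auto
    then have a: "\<pi> ! (p mod k) - 1 \<le> k - 1" using perm_vals[OF assms(1)] by (meson diff_le_mono)
    have "m \<le> m * k" using assms(2) by simp
    have "m * (\<pi> ! (p mod k) - 1) \<le> m * (k - 1)" using a by simp
    also have "... = m * k - m" by (simp add: right_diff_distrib')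
    finally have "m * (\<pi> ! (p mod k) - 1) + p div k + 1 \<le> m * k"
      using tp assms \<open>m \<le> m * k\<close> by linarith
    then show "v \<in> {1..m*k}" unfolding v f_def by simp
  qed
  have "card (f ` {0..<m*k}) = m*k" using card_image[OF inj] by simp
  then have "f ` {0..<m*k} = {1..m*k}" using sub
    by (intro card_subset_eq) auto
  then show ?thesis unfolding perms_def bs using inj by (simp add: distinct_map)
qed




lemma cw_nth: "b < k \<Longrightarrow> cwindow \<sigma> j k ! b = \<sigma> ! ((j + b) mod length \<sigma>)"
  unfolding cwindow_def by simp

lemma cw_len: "length (cwindow \<sigma> j k) = k"
  unfolding cwindow_def by simp

lemma win_val:
  assumes "\<pi> \<in> perms k" "k \<ge> 1" "m \<ge> 1" "b < k"
  shows "cwindow (bsig \<pi> m) j k ! b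
     = m * (\<pi> ! ((j + b) mod k) - 1) + ((j + b) mod (m * k)) div k + 1"
proof -
  have len: "length \<pi> = k" using perm_len assms(1) by blast
  have pos: "m * k > 0" using assms by simp
  have "cwindow (bsig \<pi> m) j k ! b = bsig \<pi> m ! ((j + b) mod (m * k))"
    using cw_nth[OF assms(4)] bsig_len len by simp
  also have "... = m * (\<pi> ! ((j + b) mod (m * k) mod k) - 1) + ((j + b) mod (m * k)) div k + 1"
    using bsig_nth[of "(j + b) mod (m * k)" m \<pi>] len pos by simp
  also have "(j + b) mod (m * k) mod k = (j + b) mod k" by (simp add: mod_mod_cancel)
  finally show ?thesis .
qed

lemma blk_lt: "(k::nat) \<ge> 1 \<Longrightarrow> m \<ge> 1 \<Longrightarrow> (x mod (m * k)) div k < m"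
proof -
  assume "k \<ge> 1" "m \<ge> 1"
  then have "0 < m * k" by (simp add: Suc_le_eq)
  then have "x mod (m * k) < m * k" by (rule mod_less_divisor)
  then show ?thesis by (simp add: less_mult_imp_div_less)
qed

lemma win_aligned:
  assumes "\<pi> \<in> perms k" "k \<ge> 1" "m \<ge> 1" "j < m * k" "j mod k = 0"
  shows "order_iso (cwindow (bsig \<pi> m) j k) \<pi>"
proof -
  have len: "length \<pi> = k" using perm_len assms(1) by blast
  obtain t where t: "j = k * t" using assms(5) by auto
  have tm: "t < m" using assms(4) t by (simp add: mult.commute)
  have v: "cwindow (bsig \<pi> m) j k ! b = m * (\<pi> ! b - 1) + t + 1" if b: "b < k" for b
  proof -
    have "j + b < m * k"
    proof -
      have "j + b < k * t + k" using t b by simp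
      also have "... = k * (t + 1)" by simp
      also have "... \<le> k * m" using tm by (intro mult_le_mono2) simp
      finally show ?thesis by (simp add: mult.commute)
    qed
    then have "(j + b) mod (m * k) = j + b" by simp
    moreover have "(j + b) div k = t" using t b by simp
    moreover have "(j + b) mod k = b" using t b by simp
    ultimately show ?thesis using win_val[OF assms(1-3) b, of j] by simp
  qed
  show ?thesis unfolding order_iso_def
  proof (intro conjI allI impI)
    show "length (cwindow (bsig \<pi> m) j k) = length \<pi>" using cw_len len by simp
    fix a b assume a: "a < length (cwindow (bsig \<pi> m) j k)" and b: "b < length (cwindow (bsig \<pi> m) j k)"
    then have a': "a < k" and b': "b < k" using cw_len by auto
    have "1 \<le> \<pi> ! a" "1 \<le> \<pi> ! b" using perm_vals[OF assms(1)] a' b' by auto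
    then show "(cwindow (bsig \<pi> m) j k ! a < cwindow (bsig \<pi> m) j k ! b) = (\<pi> ! a < \<pi> ! b)"
      using v[OF a'] v[OF b'] assms(3) by auto
  qed
qed

lemma find_b:
  fixes c k j :: nat
  assumes "c < k"
  shows "(j + (c + k - j mod k) mod k) mod k = c"
proof -
  have "j mod k < k" proof -
    have "k > 0" using assms by simp
    then show ?thesis by simp
  qed
  have "(j + (c + k - j mod k) mod k) mod k = (j + (c + k - j mod k)) mod k"
    by (rule mod_add_right_eq)
  also have "j + (c + k - j mod k) = k * (j div k) + k + c"
  proof -
    have "j = k * (j div k) + j mod k" by simp
    then show ?thesis using \<open>j mod k < k\<close> by linarith
  qed
  also have "(k * (j div k) + k + c) mod k = c"
  proof -
    have "k * (j div k) + k + c = c + k * (j div k + 1)" by (simp add: algebra_simps)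
    then show ?thesis using assms by (simp only: mod_mult_self2) simp
  qed
  finally show ?thesis .
qed

lemma not_aligned:
  fixes c k j :: nat
  assumes "c < k" "j mod k \<noteq> 0"
  shows "(j + c) mod k \<noteq> c"
proof
  assume h: "(j + c) mod k = c"
  have "(j + c) mod k = (j mod k + c) mod k" by (rule mod_add_left_eq[symmetric])
  then have e: "(j mod k + c) mod k = c" using h by simp
  have r: "j mod k < k" proof -
    have "k > 0" using assms by simp
    then show ?thesis by simp
  qed
  show False
  proof (cases "j mod k + c < k")
    case True
    then show False using e assms(2) by simp
  next
    case False
    then have lt: "j mod k + c - k < k" "k \<le> j mod k + c" using r assms(1) by linarith+
    then have "(j mod k + c) mod k = j mod k + c - k"
      by (simp add: le_mod_geq)
    then show False using e r lt by linarith
  qed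
qed




lemma perms_finite: "finite (perms n)"
proof -
  have "perms n \<subseteq> {xs. set xs \<subseteq> {1..n} \<and> length xs = n}"
    using perm_len unfolding perms_def by auto
  moreover have "finite {xs. set xs \<subseteq> {1..n} \<and> length xs = n}"
    by (rule finite_lists_length_eq) simp
  ultimately show ?thesis by (rule finite_subset)
qed

lemma Av_finite: "finite (Av n P)"
proof -
  have "Av n P \<subseteq> cyc ` perms n" unfolding Av_def by auto
  then show ?thesis using perms_finite finite_subset by blast
qed

lemma mod_inj:
  fixes j t t' n :: nat
  assumes "t < n" "t' < n" "(j + t) mod n = (j + t') mod n"
  shows "t = t'"
proof -
  have "((j + t) mod n + (n - j mod n)) mod n = ((j + t') mod n + (n - j mod n)) mod n"
    using assms(3) by simp
  then have "(j + t + (n - j mod n)) mod n = (j + t' + (n - j mod n)) mod n"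
    by (simp add: mod_add_left_eq)
  moreover have "j + t + (n - j mod n) = t + n * (j div n + 1)"
  proof -
    have "j = n * (j div n) + j mod n" by simp
    moreover have "j mod n < n" using assms by simp
    ultimately have "j + t + (n - j mod n) = n * (j div n) + n + t" by linarith
    moreover have "n * (j div n) + n + t = t + n * (j div n + 1)" by (simp add: algebra_simps)
    ultimately show ?thesis by simp
  qed
  moreover have "j + t' + (n - j mod n) = t' + n * (j div n + 1)"
  proof -
    have "j = n * (j div n) + j mod n" by simp
    moreover have "j mod n < n" using assms by simp
    ultimately have "j + t' + (n - j mod n) = n * (j div n) + n + t'" by linarith
    moreover have "n * (j div n) + n + t' = t' + n * (j div n + 1)" by (simp add: algebra_simps)
    ultimately show ?thesis by simp
  qed
  ultimately have "(t + n * (j div n + 1)) mod n = (t' + n * (j div n + 1)) mod n" by (simp only:)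
  then have "t mod n = t' mod n" by (simp only: mod_mult_self2)
  then show ?thesis using assms by simp
qed

lemma win_distinct:
  assumes "\<sigma> \<in> perms n" "k \<le> n"
  shows "distinct (cwindow \<sigma> j k)"
proof -
  have len: "length \<sigma> = n" using perm_len assms(1) by blast
  have d: "distinct \<sigma>" using assms(1) perms_def by auto
  have "inj_on (\<lambda>t. \<sigma> ! ((j + t) mod n)) {0..<k}"
  proof (rule inj_onI)
    fix t t' assume t: "t \<in> {0..<k}" and t': "t' \<in> {0..<k}"
      and e: "\<sigma> ! ((j + t) mod n) = \<sigma> ! ((j + t') mod n)"
    have "n > 0" using t assms(2) by simp
    then have "(j + t) mod n < n" "(j + t') mod n < n" by simp_all
    then have "(j + t) mod n = (j + t') mod n" using e nth_eq_iff_index_eq[OF d] len by auto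
    then show "t = t'" using mod_inj[of t n t' j] t t' assms(2) by auto
  qed
  then show ?thesis unfolding cwindow_def len by (simp add: distinct_map)
qed

lemma win_vals:
  assumes "\<sigma> \<in> perms n" "b < k" "n > 0"
  shows "cwindow \<sigma> j k ! b \<in> {1..n}"
proof -
  have len: "length \<sigma> = n" using perm_len assms(1) by blast
  have "(j + b) mod n < n" using assms(3) by simp
  then have "\<sigma> ! ((j + b) mod n) \<in> set \<sigma>" using len by simp
  then show ?thesis using cw_nth[OF assms(2)] len assms(1) unfolding perms_def by auto
qed

lemma win_center:
  assumes "\<sigma> \<in> perms n" "k \<le> n" "c < k" "p < n"
  shows "cwindow \<sigma> ((p + n - c) mod n) k ! c = \<sigma> ! p"
proof -
  have len: "length \<sigma> = n" using perm_len assms(1) by blast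
  have "((p + n - c) mod n + c) mod n = (p + n - c + c) mod n" by (rule mod_add_left_eq)
  also have "p + n - c + c = p + n" using assms by simp
  also have "(p + n) mod n = p" using assms by simp
  finally show ?thesis using cw_nth[OF assms(3)] len by simp
qed

lemma contains_some:
  assumes "\<sigma> \<in> perms n" "1 \<le> k" "k \<le> n" "c < k" "v \<in> {1..n}"
  shows "\<exists>j<n. distinct (cwindow \<sigma> j k) \<and> cwindow \<sigma> j k ! c = v"
proof -
  have len: "length \<sigma> = n" using perm_len assms(1) by blast
  have "v \<in> set \<sigma>" using assms(1,5) unfolding perms_def by auto
  then obtain p where p: "p < n" "\<sigma> ! p = v" using in_set_conv_nth[of v \<sigma>] len by auto
  have "n > 0" using assms by simp
  then have "(p + n - c) mod n < n" by simp
  then show ?thesis using win_center[OF assms(1,3,4) p(1)] p(2) win_distinct[OF assms(1,3)] by blast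
qed

lemma unav_low:
  assumes "1 \<le> i" "i \<le> k"
  shows "unavoidable (Pi_low i k)"
  unfolding unavoidable_def
proof (intro exI allI impI)
  fix n assume kn: "k \<le> n"
  have "Av n (Pi_low i k) = {}"
  proof (rule ccontr)
    assume "Av n (Pi_low i k) \<noteq> {}"
    then obtain \<sigma> where s: "\<sigma> \<in> perms n" and av: "\<not> (\<exists>\<pi>\<in>Pi_low i k. cyc_contains \<sigma> \<pi>)"
      unfolding Av_def by auto
    have len: "length \<sigma> = n" using perm_len s by blast
    have n0: "n > 0" using assms kn by simp
    have ex: "\<exists>j<n. distinct (cwindow \<sigma> j k) \<and> cwindow \<sigma> j k ! (i - 1) = 1"
      by (rule contains_some[OF s _ kn]) (use assms kn in auto)
    then obtain j where j: "j < n" and dw: "distinct (cwindow \<sigma> j k)" and wc: "cwindow \<sigma> j k ! (i - 1) = 1"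
      by blast
    define w where "w = cwindow \<sigma> j k"
    have lw: "length w = k" unfolding w_def by (rule cw_len)
    have sp: "stdz w \<in> perms k" using stdz_perm[of w] dw lw unfolding w_def by simp
    have "{b. b < length w \<and> w ! b \<le> w ! (i - 1)} = {i - 1}"
    proof
      show "{b. b < length w \<and> w ! b \<le> w ! (i - 1)} \<subseteq> {i - 1}"
      proof
        fix b assume "b \<in> {b. b < length w \<and> w ! b \<le> w ! (i - 1)}"
        then have b: "b < k" "w ! b \<le> 1" using wc lw unfolding w_def by auto
        have "w ! b \<ge> 1" using win_vals[OF s b(1) n0] unfolding w_def by auto
        then have "w ! b = w ! (i - 1)" using b wc unfolding w_def by simp
        then have "b = i - 1" using nth_eq_iff_index_eq[OF dw[folded w_def]] b lw assms by auto
        then show "b \<in> {i - 1}" by simp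
      qed
      show "{i - 1} \<subseteq> {b. b < length w \<and> w ! b \<le> w ! (i - 1)}" using lw assms by auto
    qed
    moreover have "stdz w ! (i - 1) = rk w (i - 1)"
    proof -
      have "i - 1 < k" using assms by simp
      then show ?thesis unfolding stdz_def using lw by simp
    qed
    ultimately have "stdz w ! (i - 1) = 1" unfolding rk_def by simp
    then have "stdz w \<in> Pi_low i k" using sp unfolding Pi_low_def by simp
    moreover have "cyc_contains \<sigma> (stdz w)"
      unfolding cyc_contains_def using len kn j stdz_iso[OF dw[folded w_def]]
      perm_len[OF sp] unfolding w_def by auto
    ultimately show False using av by blast
  qed
  then show "card (Av n (Pi_low i k)) = 0" by simp
qed

lemma unav_high:
  assumes "1 \<le> i" "i \<le> k"
  shows "unavoidable (Pi_high i k)"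
  unfolding unavoidable_def
proof (intro exI allI impI)
  fix n assume kn: "k \<le> n"
  have "Av n (Pi_high i k) = {}"
  proof (rule ccontr)
    assume "Av n (Pi_high i k) \<noteq> {}"
    then obtain \<sigma> where s: "\<sigma> \<in> perms n" and av: "\<not> (\<exists>\<pi>\<in>Pi_high i k. cyc_contains \<sigma> \<pi>)"
      unfolding Av_def by auto
    have len: "length \<sigma> = n" using perm_len s by blast
    have n0: "n > 0" using assms kn by simp
    have ex: "\<exists>j<n. distinct (cwindow \<sigma> j k) \<and> cwindow \<sigma> j k ! (i - 1) = n"
      by (rule contains_some[OF s _ kn]) (use assms kn in auto)
    then obtain j where j: "j < n" and dw: "distinct (cwindow \<sigma> j k)" and wc: "cwindow \<sigma> j k ! (i - 1) = n"
      by blast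
    define w where "w = cwindow \<sigma> j k"
    have lw: "length w = k" unfolding w_def by (rule cw_len)
    have sp: "stdz w \<in> perms k" using stdz_perm[of w] dw lw unfolding w_def by simp
    have "{b. b < length w \<and> w ! b \<le> w ! (i - 1)} = {..<k}"
    proof
      show "{b. b < length w \<and> w ! b \<le> w ! (i - 1)} \<subseteq> {..<k}" using lw by auto
      show "{..<k} \<subseteq> {b. b < length w \<and> w ! b \<le> w ! (i - 1)}"
      proof
        fix b assume "b \<in> {..<k}"
        then have b: "b < k" by simp
        have "w ! b \<le> n" using win_vals[OF s b n0] unfolding w_def by auto
        then show "b \<in> {b. b < length w \<and> w ! b \<le> w ! (i - 1)}" using b lw wc unfolding w_def by simp
      qed
    qed
    moreover have "stdz w ! (i - 1) = rk w (i - 1)"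
    proof -
      have "i - 1 < k" using assms by simp
      then show ?thesis unfolding stdz_def using lw by simp
    qed
    ultimately have "stdz w ! (i - 1) = k" unfolding rk_def by simp
    then have "stdz w \<in> Pi_high i k" using sp unfolding Pi_high_def by simp
    moreover have "cyc_contains \<sigma> (stdz w)"
      unfolding cyc_contains_def using len kn j stdz_iso[OF dw[folded w_def]]
      perm_len[OF sp] unfolding w_def by auto
    ultimately show False using av by blast
  qed
  then show "card (Av n (Pi_high i k)) = 0" by simp
qed


lemma avoid_low:
  assumes pi: "\<pi> \<in> Pi_low i k" and ik: "1 \<le> i" "i \<le> k" and m: "m \<ge> 1"
    and P: "P \<subseteq> Pi_low i k" "\<pi> \<notin> P"
  shows "\<not> (\<exists>\<pi>'\<in>P. cyc_contains (bsig \<pi> m) \<pi>')"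
proof
  assume "\<exists>\<pi>'\<in>P. cyc_contains (bsig \<pi> m) \<pi>'"
  then obtain \<pi>' where p': "\<pi>' \<in> P" and cc: "cyc_contains (bsig \<pi> m) \<pi>'" by blast
  have pp: "\<pi> \<in> perms k" "\<pi> ! (i - 1) = 1" using pi unfolding Pi_low_def by auto
  have pp': "\<pi>' \<in> perms k" "\<pi>' ! (i - 1) = 1" using p' P unfolding Pi_low_def by auto
  have k1: "k \<ge> 1" using ik by simp
  have lp: "length \<pi> = k" "length \<pi>' = k" using perm_len pp(1) pp'(1) by auto
  define c where "c = i - 1"
  have c: "c < k" using ik unfolding c_def by simp
  obtain j where j: "j < m * k" and oi: "order_iso (cwindow (bsig \<pi> m) j k) \<pi>'"
    using cc unfolding cyc_contains_def bsig_len lp by auto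
  define w where "w = cwindow (bsig \<pi> m) j k"
  show False
  proof (cases "j mod k = 0")
    case True
    have "order_iso w \<pi>" using win_aligned[OF pp(1) k1 m j True] unfolding w_def .
    then have "\<pi> = stdz w" using iso_unique pp(1) by blast
    moreover have "\<pi>' = stdz w" using iso_unique oi pp'(1) unfolding w_def by blast
    ultimately show False using p' P by simp
  next
    case False
    define b where "b = (c + k - j mod k) mod k"
    have b: "b < k" unfolding b_def using k1 by simp
    have jb: "(j + b) mod k = c" unfolding b_def by (rule find_b[OF c])
    have jc: "(j + c) mod k \<noteq> c" by (rule not_aligned[OF c False])
    have bc: "b \<noteq> c" using jb jc by auto
    have "w ! b = m * (\<pi> ! c - 1) + ((j + b) mod (m * k)) div k + 1"
      using win_val[OF pp(1) k1 m b, of j] jb unfolding w_def by simp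
    also have "... \<le> m" using pp(2) blk_lt[OF k1 m, of "j + b"] unfolding c_def by simp
    finally have wb: "w ! b \<le> m" .
    have x: "(j + c) mod k < k" using k1 by simp
    have "\<pi> ! ((j + c) mod k) \<noteq> 1"
      using pp(2) jc nth_eq_iff_index_eq[of \<pi> "(j + c) mod k" c] pp(1) lp x c
      unfolding perms_def c_def by auto
    then have "\<pi> ! ((j + c) mod k) \<ge> 2" using perm_vals[OF pp(1) x] by simp
    then have "\<pi> ! ((j + c) mod k) - 1 \<ge> 1" by linarith
    then have "m * 1 \<le> m * (\<pi> ! ((j + c) mod k) - 1)" by (rule mult_le_mono2)
    then have "m * (\<pi> ! ((j + c) mod k) - 1) \<ge> m" by simp
    then have "w ! c > m"
      using win_val[OF pp(1) k1 m c, of j] unfolding w_def by linarith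
    then have "w ! b < w ! c" using wb by simp
    then have "\<pi>' ! b < \<pi>' ! c" using oi b c cw_len unfolding order_iso_def w_def by metis
    moreover have "\<pi>' ! b \<ge> 1" using perm_vals[OF pp'(1) b] by simp
    ultimately show False using pp'(2) unfolding c_def by simp
  qed
qed

lemma avoid_high:
  assumes pi: "\<pi> \<in> Pi_high i k" and ik: "1 \<le> i" "i \<le> k" and m: "m \<ge> 1"
    and P: "P \<subseteq> Pi_high i k" "\<pi> \<notin> P"
  shows "\<not> (\<exists>\<pi>'\<in>P. cyc_contains (bsig \<pi> m) \<pi>')"
proof
  assume "\<exists>\<pi>'\<in>P. cyc_contains (bsig \<pi> m) \<pi>'"
  then obtain \<pi>' where p': "\<pi>' \<in> P" and cc: "cyc_contains (bsig \<pi> m) \<pi>'" by blast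
  have pp: "\<pi> \<in> perms k" "\<pi> ! (i - 1) = k" using pi unfolding Pi_high_def by auto
  have pp': "\<pi>' \<in> perms k" "\<pi>' ! (i - 1) = k" using p' P unfolding Pi_high_def by auto
  have k1: "k \<ge> 1" using ik by simp
  have lp: "length \<pi> = k" "length \<pi>' = k" using perm_len pp(1) pp'(1) by auto
  define c where "c = i - 1"
  have c: "c < k" using ik unfolding c_def by simp
  obtain j where j: "j < m * k" and oi: "order_iso (cwindow (bsig \<pi> m) j k) \<pi>'"
    using cc unfolding cyc_contains_def bsig_len lp by auto
  define w where "w = cwindow (bsig \<pi> m) j k"
  show False
  proof (cases "j mod k = 0")
    case True
    have "order_iso w \<pi>" using win_aligned[OF pp(1) k1 m j True] unfolding w_def .
    then have "\<pi> = stdz w" using iso_unique pp(1) by blast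
    moreover have "\<pi>' = stdz w" using iso_unique oi pp'(1) unfolding w_def by blast
    ultimately show False using p' P by simp
  next
    case False
    define b where "b = (c + k - j mod k) mod k"
    have b: "b < k" unfolding b_def using k1 by simp
    have jb: "(j + b) mod k = c" unfolding b_def by (rule find_b[OF c])
    have jc: "(j + c) mod k \<noteq> c" by (rule not_aligned[OF c False])
    have bc: "b \<noteq> c" using jb jc by auto
    have "w ! b = m * (\<pi> ! c - 1) + ((j + b) mod (m * k)) div k + 1"
      using win_val[OF pp(1) k1 m b, of j] jb unfolding w_def by simp
    also have "... > m * (k - 1)" using pp(2) unfolding c_def by simp
    finally have wb: "w ! b > m * (k - 1)" .
    have x: "(j + c) mod k < k" using k1 by simp
    have "\<pi> ! ((j + c) mod k) \<noteq> k"
      using pp(2) jc nth_eq_iff_index_eq[of \<pi> "(j + c) mod k" c] pp(1) lp x c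
      unfolding perms_def c_def by auto
    then have le: "\<pi> ! ((j + c) mod k) \<le> k - 1" "\<pi> ! ((j + c) mod k) \<ge> 1"
      using perm_vals[OF pp(1) x] by auto
    have "w ! c = m * (\<pi> ! ((j + c) mod k) - 1) + ((j + c) mod (m * k)) div k + 1"
      using win_val[OF pp(1) k1 m c, of j] unfolding w_def by simp
    also have "... \<le> m * (\<pi> ! ((j + c) mod k) - 1) + m"
      using blk_lt[OF k1 m, of "j + c"] by simp
    also have "... = m * \<pi> ! ((j + c) mod k)"
    proof -
      have "\<pi> ! ((j + c) mod k) = (\<pi> ! ((j + c) mod k) - 1) + 1" using le by simp
      then show ?thesis by (metis add.commute mult.right_neutral distrib_left)
    qed
    also have "... \<le> m * (k - 1)" using le by simp
    finally have "w ! c < w ! b" using wb by simp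
    then have "\<pi>' ! c < \<pi>' ! b" using oi b c cw_len unfolding order_iso_def w_def by metis
    moreover have "\<pi>' ! b \<le> k" using perm_vals[OF pp'(1) b] by simp
    ultimately show False using pp'(2) unfolding c_def by simp
  qed
qed


lemma minimal_of:
  assumes U: "unavoidable P" and k1: "k \<ge> 1"
    and A: "\<And>\<pi> P' m. \<pi> \<in> P \<Longrightarrow> P' \<subseteq> P \<Longrightarrow> \<pi> \<notin> P' \<Longrightarrow> m \<ge> 1 \<Longrightarrow>
              \<exists>\<sigma> \<in> perms (m * k). \<not> (\<exists>\<pi>'\<in>P'. cyc_contains \<sigma> \<pi>')"
  shows "minimal_unavoidable P"
  unfolding minimal_unavoidable_def
proof (intro conjI allI impI)
  show "unavoidable P" by (rule U)
  fix P' assume sub: "P' \<subset> P"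
  then obtain \<pi> where pi: "\<pi> \<in> P" "\<pi> \<notin> P'" by blast
  show "avoidable P'"
    unfolding avoidable_def unavoidable_def
  proof
    assume "\<exists>N. \<forall>n\<ge>N. card (Av n P') = 0"
    then obtain N where N: "\<forall>n\<ge>N. card (Av n P') = 0" by blast
    define m where "m = N + 1"
    have m1: "m \<ge> 1" unfolding m_def by simp
    have "m * 1 \<le> m * k" using k1 by (rule mult_le_mono2)
    then have "N \<le> m * k" unfolding m_def by simp
    then have c0: "card (Av (m * k) P') = 0" using N by blast
    obtain \<sigma> where s: "\<sigma> \<in> perms (m * k)" "\<not> (\<exists>\<pi>'\<in>P'. cyc_contains \<sigma> \<pi>')"
      using A[OF pi(1) _ pi(2) m1] sub by blast
    have "cyc \<sigma> \<in> Av (m * k) P'" unfolding Av_def using s by blast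
    then have "Av (m * k) P' \<noteq> {}" by blast
    then have "card (Av (m * k) P') > 0" using Av_finite card_gt_0_iff by blast
    then show False using c0 by simp
  qed
qed

theorem theorem6p1:
  fixes i k :: nat
  assumes "1 \<le> i" and "i \<le> k"
  shows "minimal_unavoidable (Pi_low i k) \<and> minimal_unavoidable (Pi_high i k)"
proof
  have k1: "k \<ge> 1" using assms by simp
  show "minimal_unavoidable (Pi_low i k)"
  proof (rule minimal_of[OF unav_low[OF assms] k1])
    fix \<pi> P' m assume h: "\<pi> \<in> Pi_low i k" "P' \<subseteq> Pi_low i k" "\<pi> \<notin> P'" "1 \<le> (m::nat)"
    have "\<pi> \<in> perms k" using h(1) unfolding Pi_low_def by simp
    then have "bsig \<pi> m \<in> perms (m * k)" using bsig_perm k1 h(4) by blast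
    then show "\<exists>\<sigma> \<in> perms (m * k). \<not> (\<exists>\<pi>'\<in>P'. cyc_contains \<sigma> \<pi>')"
      using avoid_low[OF h(1) assms h(4) h(2) h(3)] by blast
  qed
  show "minimal_unavoidable (Pi_high i k)"
  proof (rule minimal_of[OF unav_high[OF assms] k1])
    fix \<pi> P' m assume h: "\<pi> \<in> Pi_high i k" "P' \<subseteq> Pi_high i k" "\<pi> \<notin> P'" "1 \<le> (m::nat)"
    have "\<pi> \<in> perms k" using h(1) unfolding Pi_high_def by simp
    then have "bsig \<pi> m \<in> perms (m * k)" using bsig_perm k1 h(4) by blast
    then show "\<exists>\<sigma> \<in> perms (m * k). \<not> (\<exists>\<pi>'\<in>P'. cyc_contains \<sigma> \<pi>')"
      using avoid_high[OF h(1) assms h(4) h(2) h(3)] by blast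
  qed
qed


end
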